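(* Let $(L_n)_{n\in\mathbb N}$ be an integer sequence with $L_n\ge\tilde c\log n$ for some $\tilde c>0$ and all $n$. Then there is a sequence $(\delta_n)$ with $\delta_n\to0$ such that, for all $n$ large enough, with $\mathrm{GW}$-probability at least $1-n^{-2}$ the following holds: for every site $x\in\mathcal Z_{\lceil L_n(1+\delta_n)\rceil}$ there exists a site $y$ on the directed path from the root to $x$ with $|y|\ge L_n$ and $\deg(y)\le\log\log n$.
   Context: $\mu$: offspring distribution on $\mathbb N_0$ with $p_0=0$ and mean $\mathfrak m=\sum_\ell\ell\mu(\ell)\in(1,\infty)$; $\mathrm{GW}$ the law of the Galton--Watson tree with offspring distribution $\mu$, root $o$, edges directed from parent to child; $|y|$ distance to $o$, $\mathcal Z_\ell$ the $\ell$-th generation; $\deg$ the degree in the tree. *)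

theory Defs
  imports "HOL-Probability.Probability" "HOL-Library.Sublist"
begin

text \<open>A sample \<open>\<omega>\<close> assigns to every
  Ulam--Harris label \<open>u :: nat list\<close> an offspring number \<open>\<omega> u\<close>; these are i.i.d. with law \<open>\<mu>\<close>.
  The root is \<open>[]\<close>, the children of \<open>u\<close> are \<open>u @ [i]\<close> for \<open>i < \<omega> u\<close>.\<close>

definition GW :: "nat pmf \<Rightarrow> (nat list \<Rightarrow> nat) measure" where
  "GW \<mu> = PiM UNIV (\<lambda>_::nat list. measure_pmf \<mu>)"

definition in_tree :: "(nat list \<Rightarrow> nat) \<Rightarrow> nat list \<Rightarrow> bool" where
  "in_tree \<omega> u \<longleftrightarrow> (\<forall>k < length u. u ! k < \<omega> (take k u))"

definition generation :: "(nat list \<Rightarrow> nat) \<Rightarrow> nat \<Rightarrow> nat list set" where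
  "generation \<omega> l = {u. in_tree \<omega> u \<and> length u = l}"

text \<open>Degree in the (undirected) tree: number of children plus one edge to the parent
  for non-root vertices.\<close>
definition tree_deg :: "(nat list \<Rightarrow> nat) \<Rightarrow> nat list \<Rightarrow> nat" where
  "tree_deg \<omega> u = \<omega> u + (if u = [] then 0 else 1)"

end

theory Submission
  imports Defs
begin


lemma lists_Suc_bij:
  "bij_betw (\<lambda>(xs,i). xs @ [i]) ({xs::nat list. length xs = N} \<times> UNIV) {xs. length xs = Suc N}"
proof (rule bij_betwI[where g="\<lambda>xs. (butlast xs, last xs)"])
  show "(\<lambda>(xs, i). xs @ [i]) \<in> {xs::nat list. length xs = N} \<times> UNIV \<rightarrow> {xs. length xs = Suc N}" by auto
  show "(\<lambda>xs. (butlast xs, last xs)) \<in> {xs::nat list. length xs = Suc N} \<rightarrow> {xs. length xs = N} \<times> UNIV" by auto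
  show "\<And>x. x \<in> {xs::nat list. length xs = N} \<times> UNIV \<Longrightarrow> (butlast (case x of (xs, i) \<Rightarrow> xs @ [i]), last (case x of (xs, i) \<Rightarrow> xs @ [i])) = x" by auto
  show "\<And>y. y \<in> {xs::nat list. length xs = Suc N} \<Longrightarrow> (case (butlast y, last y) of (xs, i) \<Rightarrow> xs @ [i]) = y"
    by (auto intro: append_butlast_last_id)
qed

lemma nn_integral_lists:
  fixes p :: "nat \<Rightarrow> nat \<Rightarrow> ennreal"
  shows "(\<integral>\<^sup>+x. (\<Prod>j<N. p j (x!j)) \<partial>count_space {xs::nat list. length xs = N})
     = (\<Prod>j<N. \<integral>\<^sup>+i. p j i \<partial>count_space UNIV)"
proof (induction N)
  case 0
  have "{xs::nat list. length xs = 0} = {[]}" by auto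
  then show ?case by (simp add: nn_integral_count_space_finite)
next
  case (Suc N)
  let ?A = "{xs::nat list. length xs = N}"
  have cA: "countable ?A" by simp
  have "(\<integral>\<^sup>+x. (\<Prod>j<Suc N. p j (x!j)) \<partial>count_space {xs::nat list. length xs = Suc N})
      = (\<integral>\<^sup>+z. (\<Prod>j<Suc N. p j (((\<lambda>(xs,i). xs @ [i]) z)!j)) \<partial>count_space (?A \<times> UNIV))"
    by (rule nn_integral_bij_count_space[OF lists_Suc_bij, symmetric])
  also have "\<dots> = (\<integral>\<^sup>+z. (\<Prod>j<N. p j (fst z!j)) * p N (snd z) \<partial>count_space (?A \<times> UNIV))"
  proof (rule nn_integral_cong)
    fix z assume "z \<in> space (count_space (?A \<times> (UNIV::nat set)))"
    then obtain xs i where z: "z = (xs,i)" "length xs = N" by auto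
    have "(\<Prod>j<N. p j ((xs @ [i])!j)) = (\<Prod>j<N. p j (xs!j))"
      by (rule prod.cong) (auto simp: nth_append z)
    then show "(\<Prod>j<Suc N. p j (((\<lambda>(xs,i). xs @ [i]) z)!j)) = (\<Prod>j<N. p j (fst z!j)) * p N (snd z)"
      using z by (simp add: nth_append)
  qed
  also have "\<dots> = (\<integral>\<^sup>+z. (\<Prod>j<N. p j (fst z!j)) * p N (snd z) \<partial>(count_space ?A \<Otimes>\<^sub>M count_space UNIV))"
    by (simp add: pair_measure_countable)
  also have "\<dots> = (\<integral>\<^sup>+x. \<integral>\<^sup>+i. (\<Prod>j<N. p j (x!j)) * p N i \<partial>count_space UNIV \<partial>count_space ?A)"
  proof -
    have sf: "sigma_finite_measure (count_space (UNIV::nat set))"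
      by (rule sigma_finite_measure_count_space_countable) simp
    show ?thesis
      using sigma_finite_measure.nn_integral_fst[OF sf, where f="\<lambda>z. (\<Prod>j<N. p j (fst z!j)) * p N (snd z)"]
      by (simp add: pair_measure_countable)
  qed
  also have "\<dots> = (\<integral>\<^sup>+x. (\<Prod>j<N. p j (x!j)) * (\<integral>\<^sup>+i. p N i \<partial>count_space UNIV) \<partial>count_space ?A)"
    by (simp add: nn_integral_cmult)
  also have "\<dots> = (\<integral>\<^sup>+x. (\<Prod>j<N. p j (x!j)) \<partial>count_space ?A) * (\<integral>\<^sup>+i. p N i \<partial>count_space UNIV)"
    by (simp add: nn_integral_multc)
  also have "\<dots> = (\<Prod>j<Suc N. \<integral>\<^sup>+i. p j i \<partial>count_space UNIV)"
    using Suc by simp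
  finally show ?case .
qed


lemma tail_sum:
  fixes \<mu> :: "nat pmf"
  shows "(\<integral>\<^sup>+i. emeasure (measure_pmf \<mu>) {k. i < k \<and> P k} \<partial>count_space UNIV)
     = (\<integral>\<^sup>+k. of_nat k * indicator {k. P k} k \<partial>measure_pmf \<mu>)"
proof -
  have "(\<integral>\<^sup>+i. emeasure (measure_pmf \<mu>) {k. i < k \<and> P k} \<partial>count_space UNIV)
     = (\<integral>\<^sup>+i. \<integral>\<^sup>+k. indicator {k. i < k \<and> P k} k \<partial>measure_pmf \<mu> \<partial>count_space UNIV)"
    by (simp add: nn_integral_indicator)
  also have "\<dots> = (\<integral>\<^sup>+k. \<integral>\<^sup>+i. indicator {k. i < k \<and> P k} k \<partial>count_space UNIV \<partial>measure_pmf \<mu>)"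
    by (rule nn_integral_count_space_nn_integral[symmetric]) auto
  also have "\<dots> = (\<integral>\<^sup>+k. of_nat k * indicator {k. P k} k \<partial>measure_pmf \<mu>)"
  proof (rule nn_integral_cong)
    fix k :: nat
    have "(\<integral>\<^sup>+i. indicator {k. i < k \<and> P k} k \<partial>count_space UNIV)
        = (\<integral>\<^sup>+i. indicator {..<k} i * indicator {k. P k} k \<partial>count_space UNIV)"
      by (rule nn_integral_cong) (auto simp: indicator_def)
    also have "\<dots> = (\<integral>\<^sup>+i. indicator {..<k} i \<partial>count_space UNIV) * indicator {k. P k} k"
      by (rule nn_integral_multc) simp
    also have "\<dots> = of_nat k * indicator {k. P k} k"
      by (simp add: emeasure_count_space)
    finally show "(\<integral>\<^sup>+i. indicator {k. i < k \<and> P k} k \<partial>count_space UNIV) = of_nat k * indicator {k. P k} k" .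
  qed
  finally show ?thesis .
qed


lemma nn_integral_count_space_ge_point:
  fixes f :: "'a \<Rightarrow> ennreal"
  assumes "x0 \<in> X"
  shows "f x0 \<le> (\<integral>\<^sup>+x. f x \<partial>count_space X)"
proof -
  have "f x0 = (\<integral>\<^sup>+x. f x \<partial>count_space {x0})"
    by (simp add: nn_integral_count_space_finite)
  also have "\<dots> = (\<integral>\<^sup>+x. f x * indicator {x0} x \<partial>count_space X)"
    using assms by (subst nn_integral_count_space_indicator) (auto simp: nn_integral_count_space_indicator intro!: nn_integral_cong split: split_indicator)
  also have "\<dots> \<le> (\<integral>\<^sup>+x. f x \<partial>count_space X)"
    by (intro nn_integral_mono) (auto split: split_indicator)
  finally show ?thesis .
qed

lemma bad_bound:
  fixes \<mu> :: "nat pmf" and l N K :: nat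
  assumes A: "A \<in> sets (GW \<mu>)"
    and Asub: "A \<subseteq> {\<omega>\<in>space (GW \<mu>). \<exists>x. length x = N \<and> in_tree \<omega> x \<and>
                     (\<forall>j. l \<le> j \<and> j < N \<longrightarrow> K \<le> \<omega> (take j x))}"
  shows "emeasure (GW \<mu>) A \<le> (\<Prod>j<N. \<integral>\<^sup>+k. of_nat k * indicator {k. l \<le> j \<longrightarrow> K \<le> k} k \<partial>measure_pmf \<mu>)"
proof -
  define M where "M = GW \<mu>"
  define S where "S j i = {k. i < k \<and> (l \<le> j \<longrightarrow> K \<le> k)}" for j i :: nat
  define X where "X = {xs::nat list. length xs = N}"
  define C where "C x = {\<omega>\<in>space M. \<forall>j<N. \<omega> (take j x) \<in> S j (x!j)}" for x
  interpret P: product_prob_space "\<lambda>_. measure_pmf \<mu>" "UNIV :: nat list set"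
    by unfold_locales
  have Msp: "M = PiM UNIV (\<lambda>_. measure_pmf \<mu>)" by (simp add: M_def GW_def)
  have Cm: "C x \<in> sets M" for x
    unfolding C_def Msp by measurable
  have cX: "countable X" unfolding X_def by simp
  have U: "(\<Union>x\<in>X. C x) \<in> sets M"
    using Cm cX by (intro sets.countable_UN') auto
  have AU: "A \<subseteq> (\<Union>x\<in>X. C x)"
  proof
    fix \<omega> assume "\<omega> \<in> A"
    with Asub obtain x where sp: "\<omega> \<in> space (GW \<mu>)" and x: "length x = N" "in_tree \<omega> x"
       "\<forall>j. l \<le> j \<and> j < N \<longrightarrow> K \<le> \<omega> (take j x)" by blast
    have "\<omega> \<in> C x" using sp x unfolding C_def S_def M_def in_tree_def by auto
    then show "\<omega> \<in> (\<Union>x\<in>X. C x)" using x by (auto simp: X_def)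
  qed
  have "emeasure M A \<le> emeasure M (\<Union>x\<in>X. C x)"
    using AU U by (rule emeasure_mono)
  also have "\<dots> = (\<integral>\<^sup>+\<omega>. indicator (\<Union>x\<in>X. C x) \<omega> \<partial>M)"
    using U by simp
  also have "\<dots> \<le> (\<integral>\<^sup>+\<omega>. \<integral>\<^sup>+x. indicator (C x) \<omega> \<partial>count_space X \<partial>M)"
  proof (rule nn_integral_mono)
    fix \<omega>
    show "indicator (\<Union>x\<in>X. C x) \<omega> \<le> (\<integral>\<^sup>+x. indicator (C x) \<omega> \<partial>count_space X)"
    proof (cases "\<omega> \<in> (\<Union>x\<in>X. C x)")
      case True
      then obtain x0 where "x0 \<in> X" "\<omega> \<in> C x0" by auto
      then show ?thesis
        using nn_integral_count_space_ge_point[of x0 X "\<lambda>x. indicator (C x) \<omega>"] True by simp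
    qed simp
  qed
  also have "\<dots> = (\<integral>\<^sup>+x. \<integral>\<^sup>+\<omega>. indicator (C x) \<omega> \<partial>M \<partial>count_space X)"
    using cX Cm by (intro nn_integral_count_space_nn_integral) auto
  also have "\<dots> = (\<integral>\<^sup>+x. (\<Prod>j<N. emeasure (measure_pmf \<mu>) (S j (x!j))) \<partial>count_space X)"
  proof (rule nn_integral_cong)
    fix x assume "x \<in> space (count_space X)"
    then have lx: "length x = N" by (simp add: X_def)
    define J where "J = (\<lambda>j. take j x) ` {..<N}"
    have injJ: "inj_on (\<lambda>j. take j x) {..<N}"
      using lx by (intro inj_onI) (metis length_take lessThan_iff min.absorb4 min.strict_order_iff)
    have "C x = {\<omega>\<in>space M. \<forall>u\<in>J. \<omega> u \<in> S (length u) (x ! length u)}"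
      unfolding C_def J_def using lx by auto
    then have "emeasure M (C x) = (\<Prod>u\<in>J. emeasure (measure_pmf \<mu>) (S (length u) (x ! length u)))"
      unfolding Msp using P.emeasure_PiM_Collect[of J "\<lambda>u. S (length u) (x ! length u)"]
      by (simp add: J_def)
    also have "\<dots> = (\<Prod>j<N. emeasure (measure_pmf \<mu>) (S j (x!j)))"
      unfolding J_def using injJ lx by (subst prod.reindex) auto
    finally show "(\<integral>\<^sup>+\<omega>. indicator (C x) \<omega> \<partial>M) = (\<Prod>j<N. emeasure (measure_pmf \<mu>) (S j (x!j)))"
      using Cm by simp
  qed
  also have "\<dots> = (\<Prod>j<N. \<integral>\<^sup>+i. emeasure (measure_pmf \<mu>) (S j i) \<partial>count_space UNIV)"
    unfolding X_def by (rule nn_integral_lists)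
  also have "\<dots> = (\<Prod>j<N. \<integral>\<^sup>+k. of_nat k * indicator {k. l \<le> j \<longrightarrow> K \<le> k} k \<partial>measure_pmf \<mu>)"
    unfolding S_def by (rule prod.cong[OF refl]) (rule tail_sum)
  finally show ?thesis unfolding M_def .
qed


lemma G_meas:
  "{\<omega> \<in> space (GW \<mu>). \<forall>x \<in> generation \<omega> N.
              \<exists>y. prefix y x \<and> int (length y) \<ge> L \<and> real (tree_deg \<omega> y) \<le> t} \<in> sets (GW \<mu>)"
proof -
  have "{\<omega> \<in> space (GW \<mu>). \<forall>x \<in> generation \<omega> N.
              \<exists>y. prefix y x \<and> int (length y) \<ge> L \<and> real (tree_deg \<omega> y) \<le> t}
     = {\<omega> \<in> space (PiM UNIV (\<lambda>_::nat list. measure_pmf \<mu>)). \<forall>x::nat list. 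
         ((\<forall>k < length x. x ! k < \<omega> (take k x)) \<and> length x = N) \<longrightarrow>
         (\<exists>y::nat list. prefix y x \<and> int (length y) \<ge> L \<and> real (\<omega> y + (if y = [] then 0 else 1)) \<le> t)}"
    by (auto simp: GW_def generation_def in_tree_def tree_deg_def)
  also have "\<dots> \<in> sets (PiM UNIV (\<lambda>_::nat list. measure_pmf \<mu>))"
    by measurable
  finally show ?thesis by (simp add: GW_def)
qed


lemma nn_to_real:
  fixes \<mu> :: "nat pmf"
  assumes I: "integrable (measure_pmf \<mu>) real"
  shows "(\<integral>\<^sup>+k. of_nat k * indicator {k. P k} k \<partial>measure_pmf \<mu>)
       = ennreal (\<integral>k. real k * indicator {k. P k} k \<partial>measure_pmf \<mu>)"
proof -
  have "(\<integral>\<^sup>+k. of_nat k * indicator {k. P k} k \<partial>measure_pmf \<mu>)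
      = (\<integral>\<^sup>+k. ennreal (real k * indicator {k. P k} k) \<partial>measure_pmf \<mu>)"
    by (intro nn_integral_cong) (auto simp: indicator_def ennreal_of_nat_eq_real_of_nat)
  also have "\<dots> = ennreal (\<integral>k. real k * indicator {k. P k} k \<partial>measure_pmf \<mu>)"
    by (rule nn_integral_eq_integral) (auto intro!: integrable_real_mult_indicator I)
  finally show ?thesis .
qed

lemma tail_to_0:
  fixes \<mu> :: "nat pmf"
  assumes I: "integrable (measure_pmf \<mu>) real"
  shows "(\<lambda>K. \<integral>k. real k * indicator {k. K \<le> k} k \<partial>measure_pmf \<mu>) \<longlonglongrightarrow> 0"
proof -
  have "(\<lambda>K. \<integral>k. real k * indicator {k. K \<le> k} k \<partial>measure_pmf \<mu>) \<longlonglongrightarrow> (\<integral>k. (0::real) \<partial>measure_pmf \<mu>)"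
  proof (rule integral_dominated_convergence[where w=real])
    show "AE k in measure_pmf \<mu>. (\<lambda>K. real k * indicator {k. K \<le> k} k) \<longlonglongrightarrow> 0"
    proof (rule AE_I2)
      fix k :: nat
      have "eventually (\<lambda>K. real k * indicator {k. K \<le> k} k = (0::real)) sequentially"
        using eventually_gt_at_top[of k] by eventually_elim (auto simp: indicator_def)
      then show "(\<lambda>K. real k * indicator {k. K \<le> k} k) \<longlonglongrightarrow> 0"
        by (rule tendsto_eventually)
    qed
    show "\<And>K. AE k in measure_pmf \<mu>. norm (real k * indicator {k. K \<le> k} k) \<le> real k"
      by (auto simp: indicator_def)
  qed (auto simp: I)
  then show ?thesis by simp
qed

lemma final_ineq:
  fixes m c e \<epsilon> a \<delta> lr :: real and n l N :: nat
  assumes m: "m > 1" and c: "c > 0" and e: "0 \<le> e" "e \<le> \<epsilon>" and eps: "0 < \<epsilon>" "\<epsilon> < 1"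
    and a: "a = ln m + 2 / c" and d: "\<delta> = a / (- ln \<epsilon>)"
    and lc: "real l \<ge> c * ln (real n)" and n: "n \<ge> 1"
    and N: "real N \<ge> real l * (1 + \<delta>)" and lN: "l \<le> N"
  shows "m ^ l * e ^ (N - l) \<le> real n powr (-2)"
proof -
  have lneps: "ln \<epsilon> < 0" using eps by simp
  have apos: "a > 0" using a m c by (simp add: add_pos_pos)
  have dl: "\<delta> * ln \<epsilon> = - a" using d lneps by (simp add: field_simps)
  have dpos: "\<delta> \<ge> 0" using d apos lneps by (simp add: divide_nonneg_neg less_imp_le)
  have Nl: "real (N - l) \<ge> \<delta> * real l" using N lN by (simp add: of_nat_diff algebra_simps)
  have "e ^ (N - l) \<le> \<epsilon> ^ (N - l)" using e by (simp add: power_mono)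
  also have "\<dots> = \<epsilon> powr real (N - l)" using eps by (simp add: powr_realpow)
  also have "\<dots> \<le> \<epsilon> powr (\<delta> * real l)"
    using eps Nl by (intro powr_mono') auto
  finally have e1: "e ^ (N - l) \<le> \<epsilon> powr (\<delta> * real l)" .
  have "m ^ l * e ^ (N - l) \<le> m ^ l * \<epsilon> powr (\<delta> * real l)"
    using e1 m by (intro mult_left_mono) auto
  also have "\<dots> = exp (real l * ln m + \<delta> * real l * ln \<epsilon>)"
    using m eps by (simp add: powr_def exp_add exp_of_nat_mult[symmetric] ln_realpow[symmetric])
  also have "real l * ln m + \<delta> * real l * ln \<epsilon> = - 2 / c * real l"
  proof -
    have "real l * ln m + \<delta> * real l * ln \<epsilon> = real l * (ln m + \<delta> * ln \<epsilon>)" by (simp add: algebra_simps)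
    also have "ln m + \<delta> * ln \<epsilon> = - 2 / c" using dl a by simp
    finally show ?thesis by simp
  qed
  also have "- 2 / c * real l \<le> - 2 * ln (real n)"
  proof -
    have "2 / c * (c * ln (real n)) \<le> 2 / c * real l" using lc c by (intro mult_left_mono) auto
    then show ?thesis using c by simp
  qed
  then have "exp (- 2 / c * real l) \<le> exp (- 2 * ln (real n))" by simp
  also have "\<dots> = real n powr (-2)" using n by (simp add: powr_def mult.commute)
  finally show ?thesis by simp
qed


theorem mainTheorem14:
  fixes \<mu> :: "nat pmf" and L :: "nat \<Rightarrow> int" and c :: real
  assumes p0: "pmf \<mu> 0 = 0"
    and mean_fin: "integrable (measure_pmf \<mu>) real"
    and mean_gt1: "measure_pmf.expectation \<mu> real > 1"
    and c_pos: "c > 0"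
    and L_ge: "\<forall>n\<ge>1. real_of_int (L n) \<ge> c * ln (real n)"
  shows "\<exists>\<delta> :: nat \<Rightarrow> real. \<delta> \<longlonglongrightarrow> 0 \<and>
    (\<forall>\<^sub>F n in sequentially.
       measure (GW \<mu>)
         {\<omega> \<in> space (GW \<mu>).
            \<forall>x \<in> generation \<omega> (nat \<lceil>real_of_int (L n) * (1 + \<delta> n)\<rceil>).
              \<exists>y. prefix y x \<and> int (length y) \<ge> L n \<and>
                  real (tree_deg \<omega> y) \<le> ln (ln (real n))}
       \<ge> 1 - real n powr (-2))"
proof -
  define m where "m = measure_pmf.expectation \<mu> real"
  define e where "e K = (\<integral>k. real k * indicator {k. K \<le> k} k \<partial>measure_pmf \<mu>)" for K :: nat
  define Kn where "Kn n = nat \<lfloor>ln (ln (real n))\<rfloor>" for n :: nat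
  define \<epsilon> where "\<epsilon> n = max (e (Kn n)) (1 / real n)" for n :: nat
  define a where "a = ln m + 2 / c"
  define \<delta> where "\<delta> n = a / (- ln (\<epsilon> n))" for n :: nat
  have m1: "m > 1" using mean_gt1 by (simp add: m_def)
  have e_nn: "e K \<ge> 0" for K unfolding e_def by (intro integral_nonneg_AE) (auto simp: indicator_def)
  have apos: "a > 0" using m1 c_pos by (simp add: a_def add_pos_pos)
  have lnln: "filterlim (\<lambda>n::nat. ln (ln (real n))) at_top sequentially"
    by (intro filterlim_compose[OF ln_at_top] filterlim_compose[OF ln_at_top] filterlim_real_sequentially)
  have Kn_lim: "filterlim Kn at_top sequentially"
    unfolding filterlim_at_top
  proof
    fix Z :: nat
    have "eventually (\<lambda>n. real Z \<le> ln (ln (real n))) sequentially"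
      using lnln by (simp add: filterlim_at_top)
    then show "eventually (\<lambda>n. Z \<le> Kn n) sequentially"
      by eventually_elim (simp add: Kn_def le_nat_iff le_floor_iff)
  qed
  have eK: "(\<lambda>n. e (Kn n)) \<longlonglongrightarrow> 0"
    using filterlim_compose[OF tail_to_0[OF mean_fin] Kn_lim] by (simp add: e_def)
  have eps_lim: "\<epsilon> \<longlonglongrightarrow> 0"
    unfolding \<epsilon>_def using tendsto_max[OF eK lim_1_over_n] by simp
  have eps_pos: "eventually (\<lambda>n. \<epsilon> n > 0) sequentially"
    using eventually_gt_at_top[of 0] by eventually_elim (auto simp: \<epsilon>_def less_max_iff_disj)
  have "filterlim \<epsilon> (at_right 0) sequentially"
    by (rule tendsto_imp_filterlim_at_right[OF eps_lim eps_pos])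
  then have "filterlim (\<lambda>n. ln (\<epsilon> n)) at_bot sequentially"
    by (rule filterlim_compose[OF ln_at_0])
  then have "filterlim (\<lambda>n. - ln (\<epsilon> n)) at_top sequentially"
    by (simp add: filterlim_uminus_at_top)
  then have d_lim: "\<delta> \<longlonglongrightarrow> 0"
    unfolding \<delta>_def by (intro tendsto_divide_0[OF tendsto_const] filterlim_at_top_imp_at_infinity)
  have ln_lim: "filterlim (\<lambda>n::nat. ln (real n)) at_top sequentially"
    by (intro filterlim_compose[OF ln_at_top] filterlim_real_sequentially)
  have ev1: "eventually (\<lambda>n. 1 / c \<le> ln (real n)) sequentially"
    using ln_lim by (simp add: filterlim_at_top)
  have ev2: "eventually (\<lambda>n. \<epsilon> n < 1) sequentially"
    using eps_lim by (rule order_tendstoD) simp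
  have ev: "eventually (\<lambda>n. 1 \<le> n \<and> 1 / c \<le> ln (real n) \<and> \<epsilon> n < 1 \<and> \<epsilon> n > 0) sequentially"
    using eventually_ge_at_top[of 1] ev1 ev2 eps_pos by eventually_elim auto
  have PS: "prob_space (GW \<mu>)"
    unfolding GW_def by (intro prob_space_PiM prob_space_measure_pmf)
  interpret P: prob_space "GW \<mu>" by (rule PS)
  show ?thesis
  proof (rule exI[of _ \<delta>], intro conjI)
    show "\<delta> \<longlonglongrightarrow> 0" by (rule d_lim)
    show "\<forall>\<^sub>F n in sequentially. measure (GW \<mu>)
         {\<omega> \<in> space (GW \<mu>).
            \<forall>x \<in> generation \<omega> (nat \<lceil>real_of_int (L n) * (1 + \<delta> n)\<rceil>).
              \<exists>y. prefix y x \<and> int (length y) \<ge> L n \<and>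
                  real (tree_deg \<omega> y) \<le> ln (ln (real n))}
       \<ge> 1 - real n powr (-2)"
      using ev
    proof eventually_elim
      case (elim n)
      then have n1: "1 \<le> n" and lnn: "1 / c \<le> ln (real n)" and e1: "\<epsilon> n < 1" and e0: "\<epsilon> n > 0" by auto
      define t where "t = ln (ln (real n))"
      define l where "l = nat (L n)"
      define N where "N = nat \<lceil>real_of_int (L n) * (1 + \<delta> n)\<rceil>"
      define K where "K = Kn n"
      define G where "G = {\<omega> \<in> space (GW \<mu>). \<forall>x \<in> generation \<omega> N.
              \<exists>y. prefix y x \<and> int (length y) \<ge> L n \<and> real (tree_deg \<omega> y) \<le> t}"
      have Lc: "real_of_int (L n) \<ge> c * ln (real n)" using L_ge n1 by auto
      have "c * (1 / c) \<le> c * ln (real n)" using lnn c_pos by (intro mult_left_mono) auto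
      then have L1: "real_of_int (L n) \<ge> 1" using Lc c_pos by simp
      have lL: "real l = real_of_int (L n)" using L1 by (simp add: l_def)
      have l1: "l \<ge> 1" using L1 lL by linarith
      have lnneg: "ln (\<epsilon> n) < 0" using e0 e1 by simp
      have dpos: "\<delta> n \<ge> 0" unfolding \<delta>_def using apos lnneg by (simp add: divide_pos_neg less_imp_le)
      have NL: "real N \<ge> real l * (1 + \<delta> n)"
      proof -
        have "real_of_int (L n) * (1 + \<delta> n) \<ge> 0" using L1 dpos by simp
        then show ?thesis unfolding N_def using lL by (simp add: le_of_int_ceiling)
      qed
      have lN: "l \<le> N"
      proof -
        have "real l * 1 \<le> real l * (1 + \<delta> n)" using dpos by (intro mult_left_mono) auto
        then show ?thesis using NL by simp
      qed
      have Gm: "G \<in> sets (GW \<mu>)" unfolding G_def by (rule G_meas)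
      have Bsub: "space (GW \<mu>) - G \<subseteq> {\<omega>\<in>space (GW \<mu>). \<exists>x. length x = N \<and> in_tree \<omega> x \<and>
                     (\<forall>j. l \<le> j \<and> j < N \<longrightarrow> K \<le> \<omega> (take j x))}"
      proof
        fix \<omega> assume "\<omega> \<in> space (GW \<mu>) - G"
        then obtain x where sp: "\<omega> \<in> space (GW \<mu>)" and xg: "x \<in> generation \<omega> N"
          and nx: "\<And>y. prefix y x \<Longrightarrow> int (length y) \<ge> L n \<Longrightarrow> \<not> real (tree_deg \<omega> y) \<le> t"
          unfolding G_def by blast
        have xl: "length x = N" "in_tree \<omega> x" using xg by (auto simp: generation_def)
        have "K \<le> \<omega> (take j x)" if j: "l \<le> j" "j < N" for j
        proof -
          have len: "length (take j x) = j" using j xl by simp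
          have "int (length (take j x)) \<ge> L n" using len j lL by linarith
          then have "\<not> real (tree_deg \<omega> (take j x)) \<le> t" by (intro nx) (rule take_is_prefix)
          moreover have "take j x \<noteq> []" using len j l1 by auto
          ultimately have "t < real (\<omega> (take j x)) + 1" by (simp add: tree_deg_def)
          then have "\<lfloor>t\<rfloor> < int (\<omega> (take j x)) + 1"
            using floor_less_iff[of t "int (\<omega> (take j x)) + 1"] by simp
          then have "\<lfloor>t\<rfloor> \<le> int (\<omega> (take j x))" by linarith
          then have "nat \<lfloor>t\<rfloor> \<le> \<omega> (take j x)" by (simp add: nat_le_iff)
          then show ?thesis by (simp add: K_def Kn_def t_def)
        qed
        then show "\<omega> \<in> {\<omega>\<in>space (GW \<mu>). \<exists>x. length x = N \<and> in_tree \<omega> x \<and>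
                     (\<forall>j. l \<le> j \<and> j < N \<longrightarrow> K \<le> \<omega> (take j x))}"
          using sp xl by auto
      qed
      have Bm: "space (GW \<mu>) - G \<in> sets (GW \<mu>)" using Gm by auto
      have "emeasure (GW \<mu>) (space (GW \<mu>) - G)
          \<le> (\<Prod>j<N. \<integral>\<^sup>+k. of_nat k * indicator {k. l \<le> j \<longrightarrow> K \<le> k} k \<partial>measure_pmf \<mu>)"
        by (rule bad_bound[OF Bm Bsub])
      also have "\<dots> = (\<Prod>j<N. ennreal (if j < l then m else e K))"
      proof (rule prod.cong[OF refl])
        fix j
        show "(\<integral>\<^sup>+k. of_nat k * indicator {k. l \<le> j \<longrightarrow> K \<le> k} k \<partial>measure_pmf \<mu>) = ennreal (if j < l then m else e K)"
        proof (cases "j < l")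
          case True
          then have "{k. l \<le> j \<longrightarrow> K \<le> k} = UNIV" by auto
          then show ?thesis using True nn_to_real[OF mean_fin, of "\<lambda>k. l \<le> j \<longrightarrow> K \<le> k"] by (simp add: m_def)
        next
          case False
          then have "{k. l \<le> j \<longrightarrow> K \<le> k} = {k. K \<le> k}" by auto
          then show ?thesis using False nn_to_real[OF mean_fin, of "\<lambda>k. l \<le> j \<longrightarrow> K \<le> k"] by (simp add: e_def)
        qed
      qed
      also have "\<dots> = ennreal (\<Prod>j<N. (if j < l then m else e K))"
        using m1 e_nn by (intro prod_ennreal) auto
      also have "(\<Prod>j<N. (if j < l then m else e K)) = m ^ l * e K ^ (N - l)"
      proof -
        have "{..<N} = {..<l} \<union> {l..<N}" using lN by auto
        then have "(\<Prod>j<N. (if j < l then m else e K)) = (\<Prod>j\<in>{..<l} \<union> {l..<N}. (if j < l then m else e K))"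
          by simp
        also have "\<dots> = (\<Prod>j<l. (if j < l then m else e K)) * (\<Prod>j\<in>{l..<N}. (if j < l then m else e K))"
          by (rule prod.union_disjoint) auto
        also have "\<dots> = m ^ l * e K ^ (N - l)" by simp
        finally show ?thesis .
      qed
      also have "m ^ l * e K ^ (N - l) \<le> real n powr (-2)"
      proof (rule final_ineq[OF m1 c_pos e_nn _ e0 e1 a_def \<delta>_def _ n1 NL lN])
        show "e K \<le> \<epsilon> n" by (simp add: K_def \<epsilon>_def)
        show "real l \<ge> c * ln (real n)" using Lc lL by simp
      qed
      finally have "emeasure (GW \<mu>) (space (GW \<mu>) - G) \<le> ennreal (real n powr (-2))"
        by (simp add: ennreal_leI)
      then have "measure (GW \<mu>) (space (GW \<mu>) - G) \<le> real n powr (-2)"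
        by (simp add: P.emeasure_eq_measure ennreal_le_iff)
      moreover have "measure (GW \<mu>) (space (GW \<mu>) - G) = 1 - measure (GW \<mu>) G"
        using Gm by (simp add: P.prob_compl)
      ultimately show ?case unfolding G_def N_def t_def by linarith
    qed
  qed
qed

end
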